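(* Let $(G_k)_{k\in\mathbb Z}$ be a gibonacci sequence and let $F_k$ denote the Fibonacci numbers. Let $m$, $r$, $n$, $t$ be integers with $r\ge 2$ and $n\ge 1$. Then \begin{equation*} \begin{split} &F_r \sum_{j = 1}^n (-1)^{r(n - j)} F_{m - r}^{n - j} F_m^{j - 1} G_{j + t + 1} G_{j + t + 2} \cdots G_{j + t + r - 1} G_{j + t + m}\\ &\qquad = F_m^n G_{n + t + 1} G_{n + t + 2} \cdots G_{n + t + r} - (-1)^{rn} F_{m - r}^n G_{t + 1} G_{t + 2} \cdots G_{t + r}. \end{split} \end{equation*}
   Context: A gibonacci sequence $(G_k)_{k\in\mathbb Z}$ is defined by arbitrary initial values $G_0=a$, $G_1=b$ (numbers, not both zero) and $G_k=G_{k-1}+G_{k-2}$ for all integers $k$. The Fibonacci numbers $F_k$ are the gibonacci sequence with $F_0=0$, $F_1=1$, extended to all integer indices by the same recurrence. The convention $0^0=1$ is used for powers. *)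

theory Defs
  imports Complex_Main "HOL-Number_Theory.Fib"
begin

definition gibonacci :: "(int \<Rightarrow> complex) \<Rightarrow> bool" where
  "gibonacci G \<longleftrightarrow> (G 0 \<noteq> 0 \<or> G 1 \<noteq> 0) \<and> (\<forall>k. G k = G (k - 1) + G (k - 2))"

text \<open>Fibonacci numbers extended to all integer indices by the same recurrence:
  F(-k) = (-1)^(k+1) F(k).\<close>
definition fibz :: "int \<Rightarrow> int" where
  "fibz k = (if k \<ge> 0 then int (fib (nat k)) else (-1) ^ (nat (-k) + 1) * int (fib (nat (-k))))"

end

theory Submission
  imports Defs
begin

lemma fibz_rec: "fibz k = fibz (k - 1) + fibz (k - 2)"
proof (cases "k \<ge> 2")
  case True
  define p where "p = nat (k - 2)"
  then have p: "k = int p + 2" using True by simp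
  have "nat k = Suc (Suc p)" "nat (k-1) = Suc p" "nat (k-2) = p" using p by auto
  then show ?thesis using True by (simp add: fibz_def)
next
  case False
  then consider "k = 1" | "k = 0" | "k < 0" by linarith
  then show ?thesis
  proof cases
    case 1 then show ?thesis by (simp add: fibz_def)
  next
    case 2 then show ?thesis by (simp add: fibz_def numeral_3_eq_3)
  next
    case 3
    define p where "p = nat (-k)"
    then have p: "k = - int p" "p \<ge> 1" using 3 by auto
    have "nat (-k) = p" "nat (-(k-1)) = Suc p" "nat (-(k-2)) = Suc (Suc p)" using p by auto
    then have e: "fibz k = (-1) ^ (p + 1) * int (fib p)"
      "fibz (k - 1) = (-1) ^ (Suc p + 1) * int (fib (Suc p))"
      "fibz (k - 2) = (-1) ^ (Suc (Suc p) + 1) * int (fib (Suc (Suc p)))"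
      using 3 by (simp_all add: fibz_def)
    have f: "fib (Suc (Suc p)) = fib (Suc p) + fib p" by simp
    show ?thesis unfolding e f by (simp add: algebra_simps)
  qed
qed

lemma rec_zero:
  fixes f :: "int \<Rightarrow> complex"
  assumes r: "\<And>x. f x = f (x - 1) + f (x - 2)" and "f 0 = 0" "f 1 = 0"
  shows "f x = 0"
proof -
  have A: "f (int n) = 0 \<and> f (int n + 1) = 0" for n
  proof (induction n)
    case 0 then show ?case using assms(2,3) by simp
  next
    case (Suc n)
    have e: "int n + 2 - 1 = int n + 1" "int n + 2 - 2 = int n" by simp_all
    have "f (int n + 2) = f (int n + 1) + f (int n)" using r[of "int n + 2"] unfolding e .
    moreover have "int (Suc n) = int n + 1" "int n + 1 + 1 = int n + 2" by simp_all
    ultimately show ?case using Suc by (simp add: add.commute)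
  qed
  have B: "f (- int n) = 0 \<and> f (1 - int n) = 0" for n
  proof (induction n)
    case 0 then show ?case using assms(2,3) by simp
  next
    case (Suc n)
    have e: "1 - int n - 1 = - int n" "1 - int n - 2 = - int n - 1" by simp_all
    have "f (1 - int n) = f (- int n) + f (- int n - 1)" using r[of "1 - int n"] unfolding e .
    moreover have e2: "- int (Suc n) = - int n - 1" "1 - int (Suc n) = - int n" by simp_all
    ultimately show ?case using Suc unfolding e2 by simp
  qed
  show ?thesis
  proof (cases "x \<ge> 0")
    case True then show ?thesis using A[of "nat x"] by simp
  next
    case False then show ?thesis using B[of "nat (-x)"] by simp
  qed
qed

lemma gib_add:
  assumes g: "gibonacci G"
  shows "G (k + m) = of_int (fibz m) * G (k + 1) + of_int (fibz (m - 1)) * G k"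
proof -
  have gr: "\<And>x. G x = G (x - 1) + G (x - 2)" using g unfolding gibonacci_def by blast
  define f where "f m = G (k + m) - (of_int (fibz m) * G (k + 1) + of_int (fibz (m - 1)) * G k)" for m
  have "f m = 0"
  proof (rule rec_zero)
    fix x
    have "G (k + x) = G (k + x - 1) + G (k + x - 2)" by (rule gr)
    moreover have "fibz x = fibz (x - 1) + fibz (x - 2)" "fibz (x - 1) = fibz (x - 1 - 1) + fibz (x - 1 - 2)"
      using fibz_rec by blast+
    ultimately show "f x = f (x - 1) + f (x - 2)" unfolding f_def
      by (simp add: algebra_simps)
  next
    show "f 0 = 0" by (simp add: f_def fibz_def)
  next
    show "f 1 = 0" by (simp add: f_def fibz_def)
  qed
  then show ?thesis by (simp add: f_def)
qed

definition sgnp :: "int \<Rightarrow> complex" where "sgnp r = (if even r then 1 else -1)"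

lemma key:
  assumes g: "gibonacci G"
  shows "of_int (fibz r) * G (k + m) = of_int (fibz m) * G (k + r) - sgnp r * of_int (fibz (m - r)) * G k"
proof -
  have gr: "\<And>x. G x = G (x - 1) + G (x - 2)" using g unfolding gibonacci_def by blast
  define f where "f r = of_int (fibz r) * G (k + m) - (of_int (fibz m) * G (k + r) - sgnp r * of_int (fibz (m - r)) * G k)" for r
  have "f r = 0"
  proof (rule rec_zero)
    fix x
    have "G (k + x) = G (k + x - 1) + G (k + x - 2)" by (rule gr)
    moreover have "fibz x = fibz (x - 1) + fibz (x - 2)" "fibz (m - x + 2) = fibz (m - x + 2 - 1) + fibz (m - x + 2 - 2)"
      using fibz_rec by blast+
    moreover have "sgnp (x - 1) = - sgnp x" "sgnp (x - 2) = sgnp x" by (auto simp: sgnp_def)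
    ultimately show "f x = f (x - 1) + f (x - 2)" unfolding f_def
      by (simp add: algebra_simps)
  next
    show "f 0 = 0" by (simp add: f_def fibz_def sgnp_def)
  next
    show "f 1 = 0" using gib_add[OF g, of k m] by (simp add: f_def fibz_def sgnp_def)
  qed
  then show ?thesis by (simp add: f_def)
qed

lemma tele:
  fixes T :: "int \<Rightarrow> complex"
  shows "(\<Sum>j = 1..int N. T j - T (j - 1)) = T (int N) - T 0"
proof (induction N)
  case 0 then show ?case by simp
next
  case (Suc N)
  have "{1..int (Suc N)} = insert (int N + 1) {1..int N}" by auto
  then have "(\<Sum>j = 1..int (Suc N). T j - T (j - 1)) = (T (int N + 1) - T (int N)) + (\<Sum>j = 1..int N. T j - T (j - 1))"
    by simp
  then show ?case using Suc by (simp add: add.commute)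
qed

lemma alg:
  fixes s A B Q Fr Fm Fmr sr g gr g0 :: complex
  assumes "Fr * g = Fm * gr - sr * Fmr * g0"
  shows "Fr * (s * A * B * Q * g) = s * A * (B * Fm) * (Q * gr) - s * sr * (A * Fmr) * B * (g0 * Q)"
proof -
  have "Fr * (s * A * B * Q * g) = s * A * B * Q * (Fr * g)" by (simp add: algebra_simps)
  also have "\<dots> = s * A * B * Q * (Fm * gr - sr * Fmr * g0)" using assms by simp
  finally show ?thesis by (simp add: algebra_simps)
qed

theorem proposition6:
  fixes G :: "int \<Rightarrow> complex" and m r n t :: int
  assumes "gibonacci G" and "r \<ge> 2" and "n \<ge> 1"
  shows "of_int (fibz r) * (\<Sum>j = 1..n.
            (-1) ^ nat (r * (n - j)) * of_int (fibz (m - r)) ^ nat (n - j)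
            * of_int (fibz m) ^ nat (j - 1)
            * (\<Prod>i = 1..r - 1. G (j + t + i)) * G (j + t + m))
       = of_int (fibz m) ^ nat n * (\<Prod>i = 1..r. G (n + t + i))
         - (-1) ^ nat (r * n) * of_int (fibz (m - r)) ^ nat n * (\<Prod>i = 1..r. G (t + i))"
proof -
  define Fm :: complex where "Fm = of_int (fibz m)"
  define Fr :: complex where "Fr = of_int (fibz r)"
  define Fmr :: complex where "Fmr = of_int (fibz (m - r))"
  define P where "P j = (\<Prod>i = 1..r. G (j + t + i))" for j
  define Q where "Q j = (\<Prod>i = 1..r - 1. G (j + t + i))" for j
  define T where "T j = (-1) ^ nat (r * (n - j)) * Fmr ^ nat (n - j) * Fm ^ nat j * P j" for j
  have sr: "(-1::complex) ^ nat r = sgnp r" using assms(2)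
    by (simp add: sgnp_def even_nat_iff)
  have step: "Fr * ((-1) ^ nat (r * (n - j)) * Fmr ^ nat (n - j) * Fm ^ nat (j - 1) * Q j * G (j + t + m))
      = T j - T (j - 1)" if j: "j \<in> {1..n}" for j
  proof -
    have e1: "{1..r} = insert r {1..r - 1}" using assms(2) by auto
    have P1: "P j = Q j * G (j + t + r)" unfolding P_def Q_def e1 by (simp add: mult.commute)
    have "P (j - 1) = (\<Prod>i = 1..r. G (j - 1 + t + i))" by (simp add: P_def)
    also have "\<dots> = (\<Prod>i = 0..r - 1. G (j + t + i))"
      by (rule prod.reindex_bij_witness[where i="\<lambda>i. i + 1" and j="\<lambda>i. i - 1"]) (auto simp: algebra_simps)
    also have "{0..r - 1} = insert 0 {1..r - 1}" using assms(2) by auto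
    finally have P2: "P (j - 1) = G (j + t) * Q j" by (simp add: Q_def)
    have k: "Fr * G (j + t + m) = Fm * G (j + t + r) - sgnp r * Fmr * G (j + t)"
      using key[OF assms(1), of r "j + t" m] by (simp add: Fr_def Fm_def Fmr_def add.assoc)
    have n1: "nat (r * (n - (j - 1))) = nat (r * (n - j)) + nat r"
      using j assms(2) by (simp add: algebra_simps nat_add_distrib[symmetric])
    have n2: "nat (n - (j - 1)) = Suc (nat (n - j))" using j by auto
    have n3: "nat j = Suc (nat (j - 1))" using j by auto
    have "T (j - 1) = (-1) ^ nat (r * (n - j)) * sgnp r * (Fmr ^ nat (n - j) * Fmr) * Fm ^ nat (j - 1) * P (j - 1)"
      unfolding T_def n1 n2 power_add sr by (simp add: mult.commute)
    moreover have "T j = (-1) ^ nat (r * (n - j)) * Fmr ^ nat (n - j) * (Fm ^ nat (j - 1) * Fm) * P j"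
      unfolding T_def n3 by (simp add: mult.commute)
    ultimately show ?thesis unfolding P1 P2 using alg[OF k] by (simp add: mult.assoc)
  qed
  have "Fr * (\<Sum>j = 1..n. (-1) ^ nat (r * (n - j)) * Fmr ^ nat (n - j) * Fm ^ nat (j - 1) * Q j * G (j + t + m))
      = (\<Sum>j = 1..n. T j - T (j - 1))"
    unfolding sum_distrib_left using step by (rule sum.cong[OF refl])
  also have "\<dots> = T n - T 0" using tele[of T "nat n"] assms(3) by simp
  also have "\<dots> = Fm ^ nat n * P n - (-1) ^ nat (r * n) * Fmr ^ nat n * (\<Prod>i = 1..r. G (t + i))"
    by (simp add: T_def P_def)
  finally show ?thesis by (simp add: Fm_def Fr_def Fmr_def P_def Q_def)
qed

end
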